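(* Let $(\mathcal{S},\widehat{\mathcal{S}},\sigma,\tau,\iota)$ be a duplicated category of sets. Then for every object $X$ of $\mathcal{S}$ the component $\iota_X:\sigma(X)\to\tau(X)$ is a monomorphism in $\widehat{\mathcal{S}}$.
   Context: A duplicated category of sets is a quintet $(\mathcal{S},\widehat{\mathcal{S}},\sigma,\tau,\iota)$ such that: (i) $\mathcal{S}$ and $\widehat{\mathcal{S}}$ are categories satisfying Lawvere's axioms of the Elementary Theory of the Category of Sets (ETCS), i.e. each is a well-pointed topos with a natural numbers object satisfying the axiom of choice; (ii) $\sigma:\mathcal{S}\to\widehat{\mathcal{S}}$ is a functor preserving all finite limits, the subobject classifier $2$, exponentials and natural numbers objects; (iii) $\tau:\mathcal{S}\to\widehat{\mathcal{S}}$ is a functor preserving all finite limits; (iv) $\iota:\sigma\to\tau$ is a natural transformation such that $\iota_X=\mathrm{id}_{\sigma(X)}=\mathrm{id}_{\tau(X)}$ for every finite object $X$ of $\mathcal{S}$. *)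

theory Defs
  imports Main
begin

record ('o, 'a) cat =
  Ob  :: "'o set"
  Ar  :: "'a set"
  Dm  :: "'a \<Rightarrow> 'o"
  Cd  :: "'a \<Rightarrow> 'o"
  Ide :: "'o \<Rightarrow> 'a"
  Cmp :: "'a \<Rightarrow> 'a \<Rightarrow> 'a"   \<comment> \<open>Cmp C g f = g o f (f first)\<close>

definition hom :: "('o, 'a) cat \<Rightarrow> 'o \<Rightarrow> 'o \<Rightarrow> 'a set" where
  "hom C A B = {f \<in> Ar C. Dm C f = A \<and> Cd C f = B}"

definition category :: "('o, 'a) cat \<Rightarrow> bool" where
  "category C \<longleftrightarrow>
     (\<forall>f \<in> Ar C. Dm C f \<in> Ob C \<and> Cd C f \<in> Ob C) \<and>
     (\<forall>A \<in> Ob C. Ide C A \<in> hom C A A) \<and>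
     (\<forall>f \<in> Ar C. \<forall>g \<in> Ar C. Cd C f = Dm C g \<longrightarrow> Cmp C g f \<in> hom C (Dm C f) (Cd C g)) \<and>
     (\<forall>f \<in> Ar C. Cmp C (Ide C (Cd C f)) f = f \<and> Cmp C f (Ide C (Dm C f)) = f) \<and>
     (\<forall>f \<in> Ar C. \<forall>g \<in> Ar C. \<forall>h \<in> Ar C. Cd C f = Dm C g \<longrightarrow> Cd C g = Dm C h \<longrightarrow>
        Cmp C h (Cmp C g f) = Cmp C (Cmp C h g) f)"

definition monic :: "('o, 'a) cat \<Rightarrow> 'a \<Rightarrow> bool" where
  "monic C m \<longleftrightarrow> m \<in> Ar C \<and>
     (\<forall>f \<in> Ar C. \<forall>g \<in> Ar C. Dm C f = Dm C g \<longrightarrow> Cd C f = Dm C m \<longrightarrow> Cd C g = Dm C m \<longrightarrow>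
        Cmp C m f = Cmp C m g \<longrightarrow> f = g)"

definition epi :: "('o, 'a) cat \<Rightarrow> 'a \<Rightarrow> bool" where
  "epi C e \<longleftrightarrow> e \<in> Ar C \<and>
     (\<forall>f \<in> Ar C. \<forall>g \<in> Ar C. Cd C f = Cd C g \<longrightarrow> Dm C f = Cd C e \<longrightarrow> Dm C g = Cd C e \<longrightarrow>
        Cmp C f e = Cmp C g e \<longrightarrow> f = g)"

definition iso :: "('o, 'a) cat \<Rightarrow> 'a \<Rightarrow> bool" where
  "iso C f \<longleftrightarrow> f \<in> Ar C \<and> (\<exists>g \<in> hom C (Cd C f) (Dm C f).
      Cmp C g f = Ide C (Dm C f) \<and> Cmp C f g = Ide C (Cd C f))"

definition terminal :: "('o, 'a) cat \<Rightarrow> 'o \<Rightarrow> bool" where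
  "terminal C T \<longleftrightarrow> T \<in> Ob C \<and> (\<forall>X \<in> Ob C. \<exists>!f. f \<in> hom C X T)"

definition initial :: "('o, 'a) cat \<Rightarrow> 'o \<Rightarrow> bool" where
  "initial C I \<longleftrightarrow> I \<in> Ob C \<and> (\<forall>X \<in> Ob C. \<exists>!f. f \<in> hom C I X)"

definition product :: "('o, 'a) cat \<Rightarrow> 'o \<Rightarrow> 'o \<Rightarrow> 'o \<Rightarrow> 'a \<Rightarrow> 'a \<Rightarrow> bool" where
  "product C A B P p1 p2 \<longleftrightarrow> p1 \<in> hom C P A \<and> p2 \<in> hom C P B \<and>
     (\<forall>X f g. f \<in> hom C X A \<longrightarrow> g \<in> hom C X B \<longrightarrow>
        (\<exists>!h. h \<in> hom C X P \<and> Cmp C p1 h = f \<and> Cmp C p2 h = g))"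

definition equalizer :: "('o, 'a) cat \<Rightarrow> 'a \<Rightarrow> 'a \<Rightarrow> 'o \<Rightarrow> 'a \<Rightarrow> bool" where
  "equalizer C f g E e \<longleftrightarrow> f \<in> Ar C \<and> g \<in> hom C (Dm C f) (Cd C f) \<and>
     e \<in> hom C E (Dm C f) \<and> Cmp C f e = Cmp C g e \<and>
     (\<forall>X h. h \<in> hom C X (Dm C f) \<longrightarrow> Cmp C f h = Cmp C g h \<longrightarrow>
        (\<exists>!k. k \<in> hom C X E \<and> Cmp C e k = h))"

definition pullback :: "('o, 'a) cat \<Rightarrow> 'a \<Rightarrow> 'a \<Rightarrow> 'o \<Rightarrow> 'a \<Rightarrow> 'a \<Rightarrow> bool" where
  "pullback C f g P p q \<longleftrightarrow> f \<in> Ar C \<and> g \<in> Ar C \<and> Cd C f = Cd C g \<and>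
     p \<in> hom C P (Dm C f) \<and> q \<in> hom C P (Dm C g) \<and> Cmp C f p = Cmp C g q \<and>
     (\<forall>X u v. u \<in> hom C X (Dm C f) \<longrightarrow> v \<in> hom C X (Dm C g) \<longrightarrow> Cmp C f u = Cmp C g v \<longrightarrow>
        (\<exists>!k. k \<in> hom C X P \<and> Cmp C p k = u \<and> Cmp C q k = v))"

definition has_finite_limits :: "('o, 'a) cat \<Rightarrow> bool" where
  "has_finite_limits C \<longleftrightarrow> (\<exists>T. terminal C T) \<and>
     (\<forall>A \<in> Ob C. \<forall>B \<in> Ob C. \<exists>P p1 p2. product C A B P p1 p2) \<and>
     (\<forall>f \<in> Ar C. \<forall>g \<in> hom C (Dm C f) (Cd C f). \<exists>E e. equalizer C f g E e)"

text \<open>E = B^A with evaluation ev : E x A -> B, where (P, p1, p2) is a product of E and A.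
  Transposition: for every product (Q, q1, q2) of X and A and every f : Q -> B there is a
  unique h : X -> E with ev o (h x id_A) = f.\<close>
definition exponential :: "('o, 'a) cat \<Rightarrow> 'o \<Rightarrow> 'o \<Rightarrow> 'o \<Rightarrow> 'a \<Rightarrow> 'o \<Rightarrow> 'a \<Rightarrow> 'a \<Rightarrow> bool" where
  "exponential C A B E ev P p1 p2 \<longleftrightarrow> product C E A P p1 p2 \<and> ev \<in> hom C P B \<and>
     (\<forall>X Q q1 q2 f. product C X A Q q1 q2 \<longrightarrow> f \<in> hom C Q B \<longrightarrow>
        (\<exists>!h. h \<in> hom C X E \<and>
           (\<forall>k \<in> hom C Q P. Cmp C p1 k = Cmp C h q1 \<and> Cmp C p2 k = q2 \<longrightarrow> Cmp C ev k = f)))"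

definition cartesian_closed :: "('o, 'a) cat \<Rightarrow> bool" where
  "cartesian_closed C \<longleftrightarrow>
     (\<forall>A \<in> Ob C. \<forall>B \<in> Ob C. \<exists>E ev P p1 p2. exponential C A B E ev P p1 p2)"

definition subobject_classifier :: "('o, 'a) cat \<Rightarrow> 'o \<Rightarrow> 'o \<Rightarrow> 'a \<Rightarrow> bool" where
  "subobject_classifier C One Om tr \<longleftrightarrow> terminal C One \<and> tr \<in> hom C One Om \<and>
     (\<forall>m. monic C m \<longrightarrow>
        (\<exists>!\<chi>. \<chi> \<in> hom C (Cd C m) Om \<and>
           (\<exists>u \<in> hom C (Dm C m) One. pullback C \<chi> tr (Dm C m) m u)))"

definition nno :: "('o, 'a) cat \<Rightarrow> 'o \<Rightarrow> 'o \<Rightarrow> 'a \<Rightarrow> 'a \<Rightarrow> bool" where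
  "nno C One N z s \<longleftrightarrow> terminal C One \<and> z \<in> hom C One N \<and> s \<in> hom C N N \<and>
     (\<forall>X x f. x \<in> hom C One X \<longrightarrow> f \<in> hom C X X \<longrightarrow>
        (\<exists>!h. h \<in> hom C N X \<and> Cmp C h z = x \<and> Cmp C h s = Cmp C f h))"

definition topos :: "('o, 'a) cat \<Rightarrow> bool" where
  "topos C \<longleftrightarrow> category C \<and> has_finite_limits C \<and> cartesian_closed C \<and>
     (\<exists>One Om tr. subobject_classifier C One Om tr)"

definition well_pointed :: "('o, 'a) cat \<Rightarrow> bool" where
  "well_pointed C \<longleftrightarrow> (\<forall>One. terminal C One \<longrightarrow>
     \<not> initial C One \<and>
     (\<forall>X \<in> Ob C. \<forall>Y \<in> Ob C. \<forall>f \<in> hom C X Y. \<forall>g \<in> hom C X Y.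
        (\<forall>x \<in> hom C One X. Cmp C f x = Cmp C g x) \<longrightarrow> f = g))"

definition axiom_of_choice :: "('o, 'a) cat \<Rightarrow> bool" where
  "axiom_of_choice C \<longleftrightarrow>
     (\<forall>e. epi C e \<longrightarrow> (\<exists>s \<in> hom C (Cd C e) (Dm C e). Cmp C e s = Ide C (Cd C e)))"

definition ETCS :: "('o, 'a) cat \<Rightarrow> bool" where
  "ETCS C \<longleftrightarrow> topos C \<and> well_pointed C \<and> (\<exists>One N z s. nno C One N z s) \<and>
     axiom_of_choice C"

text \<open>Finite object (Dedekind): every monomorphism X -> X is an isomorphism.
  In ETCS (with choice) this agrees with the other usual notions of finiteness.\<close>
definition finite_object :: "('o, 'a) cat \<Rightarrow> 'o \<Rightarrow> bool" where
  "finite_object C X \<longleftrightarrow> X \<in> Ob C \<and> (\<forall>m \<in> hom C X X. monic C m \<longrightarrow> iso C m)"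

definition is_functor :: "('o, 'a) cat \<Rightarrow> ('p, 'b) cat \<Rightarrow> ('o \<Rightarrow> 'p) \<Rightarrow> ('a \<Rightarrow> 'b) \<Rightarrow> bool" where
  "is_functor C D FO FA \<longleftrightarrow>
     (\<forall>A \<in> Ob C. FO A \<in> Ob D) \<and>
     (\<forall>f \<in> Ar C. FA f \<in> hom D (FO (Dm C f)) (FO (Cd C f))) \<and>
     (\<forall>A \<in> Ob C. FA (Ide C A) = Ide D (FO A)) \<and>
     (\<forall>f \<in> Ar C. \<forall>g \<in> Ar C. Cd C f = Dm C g \<longrightarrow> FA (Cmp C g f) = Cmp D (FA g) (FA f))"

definition preserves_finite_limits ::
  "('o, 'a) cat \<Rightarrow> ('p, 'b) cat \<Rightarrow> ('o \<Rightarrow> 'p) \<Rightarrow> ('a \<Rightarrow> 'b) \<Rightarrow> bool" where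
  "preserves_finite_limits C D FO FA \<longleftrightarrow>
     (\<forall>T. terminal C T \<longrightarrow> terminal D (FO T)) \<and>
     (\<forall>A B P p1 p2. product C A B P p1 p2 \<longrightarrow> product D (FO A) (FO B) (FO P) (FA p1) (FA p2)) \<and>
     (\<forall>f g E e. equalizer C f g E e \<longrightarrow> equalizer D (FA f) (FA g) (FO E) (FA e))"

definition preserves_subobject_classifier ::
  "('o, 'a) cat \<Rightarrow> ('p, 'b) cat \<Rightarrow> ('o \<Rightarrow> 'p) \<Rightarrow> ('a \<Rightarrow> 'b) \<Rightarrow> bool" where
  "preserves_subobject_classifier C D FO FA \<longleftrightarrow>
     (\<forall>One Om tr. subobject_classifier C One Om tr \<longrightarrow>
        subobject_classifier D (FO One) (FO Om) (FA tr))"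

definition preserves_exponentials ::
  "('o, 'a) cat \<Rightarrow> ('p, 'b) cat \<Rightarrow> ('o \<Rightarrow> 'p) \<Rightarrow> ('a \<Rightarrow> 'b) \<Rightarrow> bool" where
  "preserves_exponentials C D FO FA \<longleftrightarrow>
     (\<forall>A B E ev P p1 p2. exponential C A B E ev P p1 p2 \<longrightarrow>
        exponential D (FO A) (FO B) (FO E) (FA ev) (FO P) (FA p1) (FA p2))"

definition preserves_nno ::
  "('o, 'a) cat \<Rightarrow> ('p, 'b) cat \<Rightarrow> ('o \<Rightarrow> 'p) \<Rightarrow> ('a \<Rightarrow> 'b) \<Rightarrow> bool" where
  "preserves_nno C D FO FA \<longleftrightarrow>
     (\<forall>One N z s. nno C One N z s \<longrightarrow> nno D (FO One) (FO N) (FA z) (FA s))"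

definition nat_trans ::
  "('o, 'a) cat \<Rightarrow> ('p, 'b) cat \<Rightarrow> ('o \<Rightarrow> 'p) \<Rightarrow> ('a \<Rightarrow> 'b) \<Rightarrow> ('o \<Rightarrow> 'p) \<Rightarrow> ('a \<Rightarrow> 'b)
     \<Rightarrow> ('o \<Rightarrow> 'b) \<Rightarrow> bool" where
  "nat_trans C D FO FA GO GA \<eta> \<longleftrightarrow>
     (\<forall>X \<in> Ob C. \<eta> X \<in> hom D (FO X) (GO X)) \<and>
     (\<forall>f \<in> Ar C. Cmp D (GA f) (\<eta> (Dm C f)) = Cmp D (\<eta> (Cd C f)) (FA f))"

definition duplicated_category_of_sets ::
  "('o, 'a) cat \<Rightarrow> ('p, 'b) cat \<Rightarrow> ('o \<Rightarrow> 'p) \<Rightarrow> ('a \<Rightarrow> 'b) \<Rightarrow> ('o \<Rightarrow> 'p) \<Rightarrow> ('a \<Rightarrow> 'b)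
     \<Rightarrow> ('o \<Rightarrow> 'b) \<Rightarrow> bool" where
  "duplicated_category_of_sets S S' \<sigma>O \<sigma>A \<tau>O \<tau>A \<iota> \<longleftrightarrow>
     ETCS S \<and> ETCS S' \<and>
     is_functor S S' \<sigma>O \<sigma>A \<and> preserves_finite_limits S S' \<sigma>O \<sigma>A \<and>
     preserves_subobject_classifier S S' \<sigma>O \<sigma>A \<and> preserves_exponentials S S' \<sigma>O \<sigma>A \<and>
     preserves_nno S S' \<sigma>O \<sigma>A \<and>
     is_functor S S' \<tau>O \<tau>A \<and> preserves_finite_limits S S' \<tau>O \<tau>A \<and>
     nat_trans S S' \<sigma>O \<sigma>A \<tau>O \<tau>A \<iota> \<and>
     (\<forall>X. finite_object S X \<longrightarrow>
        \<sigma>O X = \<tau>O X \<and> \<iota> X = Ide S' (\<sigma>O X) \<and> \<iota> X = Ide S' (\<tau>O X))"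

end

theory Submission
  imports Defs
begin

lemma hom_iff: "f \<in> hom C A B \<longleftrightarrow> f \<in> Ar C \<and> Dm C f = A \<and> Cd C f = B"
  by (simp add: hom_def)

lemma comp_hom:
  "category C \<Longrightarrow> f \<in> hom C A B \<Longrightarrow> g \<in> hom C B D \<Longrightarrow> Cmp C g f \<in> hom C A D"
  unfolding category_def hom_def by auto

lemma comp_assoc:
  "category C \<Longrightarrow> f \<in> hom C A B \<Longrightarrow> g \<in> hom C B D \<Longrightarrow> h \<in> hom C D E \<Longrightarrow>
   Cmp C h (Cmp C g f) = Cmp C (Cmp C h g) f"
  unfolding category_def hom_def by auto

lemma id_l: "category C \<Longrightarrow> f \<in> hom C A B \<Longrightarrow> Cmp C (Ide C B) f = f"
  unfolding category_def hom_def by auto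

lemma id_r: "category C \<Longrightarrow> f \<in> hom C A B \<Longrightarrow> Cmp C f (Ide C A) = f"
  unfolding category_def hom_def by auto

lemma ide_hom: "category C \<Longrightarrow> A \<in> Ob C \<Longrightarrow> Ide C A \<in> hom C A A"
  unfolding category_def by auto

lemma hom_obs: "category C \<Longrightarrow> f \<in> hom C A B \<Longrightarrow> A \<in> Ob C \<and> B \<in> Ob C"
  unfolding category_def hom_def by auto

lemma term_uniq:
  "category C \<Longrightarrow> terminal C T \<Longrightarrow> f \<in> hom C X T \<Longrightarrow> g \<in> hom C X T \<Longrightarrow> f = g"
proof -
  assume c: "category C" and t: "terminal C T" and f: "f \<in> hom C X T" and g: "g \<in> hom C X T"
  have "X \<in> Ob C" using hom_obs[OF c f] by blast
  then have "\<exists>!f. f \<in> hom C X T" using t unfolding terminal_def by blast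
  then show "f = g" using f g by blast
qed

lemma term_ex: "terminal C T \<Longrightarrow> X \<in> Ob C \<Longrightarrow> \<exists>f. f \<in> hom C X T"
  unfolding terminal_def by auto

lemma term_ob: "terminal C T \<Longrightarrow> T \<in> Ob C"
  unfolding terminal_def by auto

lemma F_hom: "is_functor C D FO FA \<Longrightarrow> f \<in> hom C A B \<Longrightarrow> FA f \<in> hom D (FO A) (FO B)"
  unfolding is_functor_def hom_def by auto

lemma F_comp: "is_functor C D FO FA \<Longrightarrow> f \<in> hom C A B \<Longrightarrow> g \<in> hom C B E \<Longrightarrow>
   FA (Cmp C g f) = Cmp D (FA g) (FA f)"
  unfolding is_functor_def hom_def by auto

lemma F_id: "is_functor C D FO FA \<Longrightarrow> A \<in> Ob C \<Longrightarrow> FA (Ide C A) = Ide D (FO A)"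
  unfolding is_functor_def by auto

lemma nt_hom: "nat_trans C D FO FA GO GA \<eta> \<Longrightarrow> X \<in> Ob C \<Longrightarrow> \<eta> X \<in> hom D (FO X) (GO X)"
  unfolding nat_trans_def by auto

lemma nt_nat: "nat_trans C D FO FA GO GA \<eta> \<Longrightarrow> f \<in> hom C A B \<Longrightarrow>
   Cmp D (GA f) (\<eta> A) = Cmp D (\<eta> B) (FA f)"
  unfolding nat_trans_def hom_def by auto

lemma prod_pair: "product C A B P p1 p2 \<Longrightarrow> f \<in> hom C X A \<Longrightarrow> g \<in> hom C X B \<Longrightarrow>
   \<exists>h. h \<in> hom C X P \<and> Cmp C p1 h = f \<and> Cmp C p2 h = g"
  unfolding product_def by blast

lemma prod_uniq: "product C A B P p1 p2 \<Longrightarrow> f \<in> hom C X A \<Longrightarrow> g \<in> hom C X B \<Longrightarrow>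
   h \<in> hom C X P \<Longrightarrow> Cmp C p1 h = f \<Longrightarrow> Cmp C p2 h = g \<Longrightarrow>
   h' \<in> hom C X P \<Longrightarrow> Cmp C p1 h' = f \<Longrightarrow> Cmp C p2 h' = g \<Longrightarrow> h = h'"
  unfolding product_def by blast

lemma prod_homs: "product C A B P p1 p2 \<Longrightarrow> p1 \<in> hom C P A \<and> p2 \<in> hom C P B"
  unfolding product_def by blast

lemma eq_factor: "equalizer C f g E e \<Longrightarrow> h \<in> hom C X (Dm C f) \<Longrightarrow> Cmp C f h = Cmp C g h \<Longrightarrow>
   \<exists>k. k \<in> hom C X E \<and> Cmp C e k = h"
  unfolding equalizer_def by blast

lemma eq_homs: "equalizer C f g E e \<Longrightarrow> e \<in> hom C E (Dm C f) \<and> Cmp C f e = Cmp C g e"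
  unfolding equalizer_def by blast

lemma ex1_uniq: "\<exists>!x. P x \<Longrightarrow> P a \<Longrightarrow> P b \<Longrightarrow> a = b" by blast

lemma eq_univ: "equalizer C f g E e \<Longrightarrow> h \<in> hom C X (Dm C f) \<Longrightarrow> Cmp C f h = Cmp C g h \<Longrightarrow>
   (\<exists>!k. k \<in> hom C X E \<and> Cmp C e k = h)"
  unfolding equalizer_def by blast

lemma eq_monic: "category C \<Longrightarrow> equalizer C f g E e \<Longrightarrow> monic C e"
proof -
  assume c: "category C" and eq: "equalizer C f g E e"
  have fa: "f \<in> Ar C" and gh: "g \<in> hom C (Dm C f) (Cd C f)" and eh: "e \<in> hom C E (Dm C f)"
    and fe: "Cmp C f e = Cmp C g e"
    using eq unfolding equalizer_def by auto
  have fh: "f \<in> hom C (Dm C f) (Cd C f)" using fa by (simp add: hom_def)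
  show ?thesis unfolding monic_def
  proof (intro conjI ballI impI)
    show "e \<in> Ar C" using eh by (simp add: hom_def)
    fix x y assume xa: "x \<in> Ar C" and ya: "y \<in> Ar C" and d: "Dm C x = Dm C y"
      and cx: "Cd C x = Dm C e" and cy: "Cd C y = Dm C e" and ex: "Cmp C e x = Cmp C e y"
    let ?X = "Dm C x"
    have xh: "x \<in> hom C ?X E" using xa cx eh by (simp add: hom_def)
    have yh: "y \<in> hom C ?X E" using ya cy eh d by (simp add: hom_def)
    have h: "Cmp C e x \<in> hom C ?X (Dm C f)" using comp_hom[OF c xh eh] .
    have "Cmp C f (Cmp C e x) = Cmp C g (Cmp C e x)"
      using comp_assoc[OF c xh eh fh] comp_assoc[OF c xh eh gh] fe by simp
    note U = eq_univ[OF eq h this]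
    show "x = y" by (rule ex1_uniq[OF U]) (use xh yh ex in auto)
  qed
qed

lemma wp:
  "well_pointed C \<Longrightarrow> terminal C One \<Longrightarrow> category C \<Longrightarrow> f \<in> hom C X Y \<Longrightarrow> g \<in> hom C X Y \<Longrightarrow>
   (\<And>x. x \<in> hom C One X \<Longrightarrow> Cmp C f x = Cmp C g x) \<Longrightarrow> f = g"
proof -
  assume w: "well_pointed C" and t: "terminal C One" and c: "category C" and f: "f \<in> hom C X Y"
    and g: "g \<in> hom C X Y" and h: "(\<And>x. x \<in> hom C One X \<Longrightarrow> Cmp C f x = Cmp C g x)"
  have o: "X \<in> Ob C" "Y \<in> Ob C" using hom_obs[OF c f] by auto
  have "\<forall>X \<in> Ob C. \<forall>Y \<in> Ob C. \<forall>f \<in> hom C X Y. \<forall>g \<in> hom C X Y.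
        (\<forall>x \<in> hom C One X. Cmp C f x = Cmp C g x) \<longrightarrow> f = g"
    using w t unfolding well_pointed_def by blast
  then show "f = g" using o f g h by blast
qed

lemma pt_pullback:
  assumes c: "category C" and fl: "has_finite_limits C" and t: "terminal C One"
    and p: "p \<in> hom C One Om" and tr: "tr \<in> hom C One Om"
  shows "\<exists>E e. monic C e \<and> e \<in> hom C E One \<and> pullback C p tr E e e"
proof -
  have pa: "p \<in> Ar C" and trh: "tr \<in> hom C (Dm C p) (Cd C p)" using p tr by (auto simp: hom_def)
  obtain E e where eq: "equalizer C p tr E e" using fl pa trh unfolding has_finite_limits_def by blast
  have eh: "e \<in> hom C E One" using eq p unfolding equalizer_def by (auto simp: hom_def)
  have U: "\<And>X h. h \<in> hom C X One \<Longrightarrow> Cmp C p h = Cmp C tr h \<Longrightarrow>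
        (\<exists>!k. k \<in> hom C X E \<and> Cmp C e k = h)"
    using eq p unfolding equalizer_def by (auto simp: hom_def)
  have pb: "pullback C p tr E e e"
    unfolding pullback_def
  proof (intro conjI allI impI)
    show "p \<in> Ar C" "tr \<in> Ar C" "Cd C p = Cd C tr" using p tr by (auto simp: hom_def)
    show "e \<in> hom C E (Dm C p)" "e \<in> hom C E (Dm C tr)" using eh p tr by (auto simp: hom_def)
    show "Cmp C p e = Cmp C tr e" using eq unfolding equalizer_def by blast
    fix X u v assume u: "u \<in> hom C X (Dm C p)" and v: "v \<in> hom C X (Dm C tr)"
      and uv: "Cmp C p u = Cmp C tr v"
    have u': "u \<in> hom C X One" and v': "v \<in> hom C X One" using u v p tr by (auto simp: hom_def)
    have "u = v" using term_uniq[OF c t u' v'] .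
    then show "\<exists>!k. k \<in> hom C X E \<and> Cmp C e k = u \<and> Cmp C e k = v"
      using U[OF u'] uv by auto
  qed
  show ?thesis using eq_monic[OF c eq] eh pb by blast
qed

lemma no_pts:
  assumes c: "category C" and t: "terminal C One" and eh: "e \<in> hom C E One"
    and pb: "pullback C p tr E e e" and p: "p \<in> hom C One Om" and ne: "p \<noteq> tr"
    and x: "x \<in> hom C One E"
  shows False
proof -
  have ex: "Cmp C e x = Ide C One" using term_uniq[OF c t comp_hom[OF c x eh] ide_hom[OF c term_ob[OF t]]] .
  have tr: "tr \<in> hom C One Om" using pb p unfolding pullback_def by (auto simp: hom_def)
  have "Cmp C p e = Cmp C tr e" using pb unfolding pullback_def by blast
  then have "Cmp C (Cmp C p e) x = Cmp C (Cmp C tr e) x" by simp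
  then have "Cmp C p (Cmp C e x) = Cmp C tr (Cmp C e x)"
    using comp_assoc[OF c x eh p] comp_assoc[OF c x eh tr] by simp
  then have "p = tr" using ex id_r[OF c p] id_r[OF c tr] by simp
  then show False using ne by simp
qed

lemma two_pts:
  assumes c: "category C" and fl: "has_finite_limits C" and w: "well_pointed C"
    and cl: "subobject_classifier C One Om tr"
    and p: "p \<in> hom C One Om" and q: "q \<in> hom C One Om" and np: "p \<noteq> tr" and nq: "q \<noteq> tr"
  shows "p = q"
proof -
  have t: "terminal C One" and tr: "tr \<in> hom C One Om" using cl unfolding subobject_classifier_def by auto
  obtain E e where m: "monic C e" and eh: "e \<in> hom C E One" and pb: "pullback C p tr E e e"
    using pt_pullback[OF c fl t p tr] by blast
  have Eob: "E \<in> Ob C" using hom_obs[OF c eh] by blast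
  have Omob: "Om \<in> Ob C" using hom_obs[OF c p] by blast
  have pbU: "\<And>X u v. u \<in> hom C X One \<Longrightarrow> v \<in> hom C X One \<Longrightarrow> Cmp C p u = Cmp C tr v \<Longrightarrow>
        (\<exists>!k. k \<in> hom C X E \<and> Cmp C e k = u \<and> Cmp C e k = v)"
    using pb p tr unfolding pullback_def by (auto simp: hom_def)
  have pbq: "pullback C q tr E e e"
    unfolding pullback_def
  proof (intro conjI allI impI)
    show "q \<in> Ar C" "tr \<in> Ar C" "Cd C q = Cd C tr" using q tr by (auto simp: hom_def)
    show "e \<in> hom C E (Dm C q)" "e \<in> hom C E (Dm C tr)" using eh q tr by (auto simp: hom_def)
    show "Cmp C q e = Cmp C tr e"
      by (rule wp[OF w t c comp_hom[OF c eh q] comp_hom[OF c eh tr]])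
         (use no_pts[OF c t eh pb p np] in blast)
    fix X u v assume u: "u \<in> hom C X (Dm C q)" and v: "v \<in> hom C X (Dm C tr)"
      and uv: "Cmp C q u = Cmp C tr v"
    have u': "u \<in> hom C X One" and v': "v \<in> hom C X One" using u v q tr by (auto simp: hom_def)
    have nz: False if z: "z \<in> hom C One X" for z
    proof -
      have uz: "Cmp C u z = Ide C One" and vz: "Cmp C v z = Ide C One"
        using term_uniq[OF c t comp_hom[OF c z u'] ide_hom[OF c term_ob[OF t]]]
          term_uniq[OF c t comp_hom[OF c z v'] ide_hom[OF c term_ob[OF t]]] by auto
      have "Cmp C (Cmp C q u) z = Cmp C (Cmp C tr v) z" using uv by simp
      then have "Cmp C q (Cmp C u z) = Cmp C tr (Cmp C v z)"
        using comp_assoc[OF c z u' q] comp_assoc[OF c z v' tr] by simp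
      then have "q = tr" using uz vz id_r[OF c q] id_r[OF c tr] by simp
      then show False using nq by simp
    qed
    have "Cmp C p u = Cmp C tr v"
      by (rule wp[OF w t c comp_hom[OF c u' p] comp_hom[OF c v' tr]]) (use nz in blast)
    then show "\<exists>!k. k \<in> hom C X E \<and> Cmp C e k = u \<and> Cmp C e k = v"
      using pbU[OF u' v'] by blast
  qed
  have de: "Dm C e = E" "Cd C e = One" using eh by (auto simp: hom_def)
  have "\<exists>!\<chi>. \<chi> \<in> hom C (Cd C e) Om \<and> (\<exists>u \<in> hom C (Dm C e) One. pullback C \<chi> tr (Dm C e) e u)"
    using cl m unfolding subobject_classifier_def by blast
  then show "p = q" using pb pbq p q eh de by auto
qed

lemma one_finite:
  assumes c: "category C" and t: "terminal C One"
  shows "finite_object C One"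
  unfolding finite_object_def
proof (intro conjI ballI impI)
  show "One \<in> Ob C" using term_ob[OF t] .
  fix m assume m: "m \<in> hom C One One" and "monic C m"
  have i: "Ide C One \<in> hom C One One" using ide_hom[OF c term_ob[OF t]] .
  have mi: "m = Ide C One" using term_uniq[OF c t m i] .
  show "iso C m" unfolding iso_def using m i mi id_l[OF c i] by (auto simp: hom_def)
qed

lemma omega_finite:
  assumes E: "ETCS C" and cl: "subobject_classifier C One Om tr"
  shows "finite_object C Om"
proof -
  have c: "category C" and fl: "has_finite_limits C" and w: "well_pointed C"
    using E unfolding ETCS_def topos_def by auto
  have t: "terminal C One" and tr: "tr \<in> hom C One Om" using cl unfolding subobject_classifier_def by auto
  have Omob: "Om \<in> Ob C" using hom_obs[OF c tr] by blast
  show ?thesis unfolding finite_object_def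
  proof (intro conjI ballI impI)
    show "Om \<in> Ob C" by fact
    fix m assume m: "m \<in> hom C Om Om" and mm: "monic C m"
    define Pts where "Pts = hom C One Om"
    have fin: "finite Pts"
    proof (cases "\<exists>p0 \<in> Pts. p0 \<noteq> tr")
      case True
      then obtain p0 where p0: "p0 \<in> Pts" "p0 \<noteq> tr" by blast
      have "Pts \<subseteq> {tr, p0}"
      proof
        fix x assume x: "x \<in> Pts"
        show "x \<in> {tr, p0}"
        proof (cases "x = tr")
          case False
          then have "x = p0" using two_pts[OF c fl w cl _ _ False p0(2)] x p0(1) Pts_def by blast
          then show ?thesis by simp
        qed simp
      qed
      then show ?thesis by (rule finite_subset) simp
    next
      case False
      then have "Pts \<subseteq> {tr}" by blast
      then show ?thesis by (rule finite_subset) simp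
    qed
    have sub: "(\<lambda>x. Cmp C m x) ` Pts \<subseteq> Pts" using comp_hom[OF c _ m] Pts_def by blast
    have inj: "inj_on (\<lambda>x. Cmp C m x) Pts"
    proof (rule inj_onI)
      fix x y assume x: "x \<in> Pts" and y: "y \<in> Pts" and e: "Cmp C m x = Cmp C m y"
      show "x = y" using mm e x y m unfolding monic_def Pts_def by (auto simp: hom_def)
    qed
    have surj: "(\<lambda>x. Cmp C m x) ` Pts = Pts" using endo_inj_surj[OF fin sub inj] .
    have md: "Dm C m = Om" "Cd C m = Om" using m by (auto simp: hom_def)
    obtain \<chi> u where ch: "\<chi> \<in> hom C Om Om" and u: "u \<in> hom C Om One"
      and pb: "pullback C \<chi> tr Om m u"
      using cl mm md unfolding subobject_classifier_def by metis
    have chm: "Cmp C \<chi> m = Cmp C tr u" using pb unfolding pullback_def by blast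
    have chi: "\<chi> = Cmp C tr u"
    proof (rule wp[OF w t c ch comp_hom[OF c u tr]])
      fix y assume y: "y \<in> hom C One Om"
      then obtain x where x: "x \<in> hom C One Om" and yx: "y = Cmp C m x" using surj Pts_def by blast
      have ux: "Cmp C u x = Cmp C u y"
        using term_uniq[OF c t comp_hom[OF c x u] comp_hom[OF c y u]] .
      have "Cmp C \<chi> y = Cmp C (Cmp C \<chi> m) x" using comp_assoc[OF c x m ch] yx by simp
      also have "\<dots> = Cmp C tr (Cmp C u x)" using chm comp_assoc[OF c x u tr] by simp
      also have "\<dots> = Cmp C (Cmp C tr u) y" using ux comp_assoc[OF c y u tr] by simp
      finally show "Cmp C \<chi> y = Cmp C (Cmp C tr u) y" .
    qed
    have idh: "Ide C Om \<in> hom C Om Om" using ide_hom[OF c Omob] .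
    have pbU: "\<And>X a b. a \<in> hom C X Om \<Longrightarrow> b \<in> hom C X One \<Longrightarrow> Cmp C \<chi> a = Cmp C tr b \<Longrightarrow>
        (\<exists>!k. k \<in> hom C X Om \<and> Cmp C m k = a \<and> Cmp C u k = b)"
      using pb ch tr unfolding pullback_def by (auto simp: hom_def)
    have "Cmp C \<chi> (Ide C Om) = Cmp C tr u" using id_r[OF c ch] chi by simp
    then obtain k where k: "k \<in> hom C Om Om" and mk: "Cmp C m k = Ide C Om"
      using pbU[OF idh u] by blast
    have "Cmp C m (Cmp C k m) = Cmp C m (Ide C Om)"
      using comp_assoc[OF c m k m] mk id_l[OF c m] id_r[OF c m] by simp
    moreover have "Cmp C k m \<in> Ar C" "Dm C (Cmp C k m) = Om" "Cd C (Cmp C k m) = Om"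
      using comp_hom[OF c m k] by (auto simp: hom_def)
    moreover have "Ide C Om \<in> Ar C" "Dm C (Ide C Om) = Om" "Cd C (Ide C Om) = Om"
      using idh by (auto simp: hom_def)
    moreover have "\<forall>f\<in>Ar C. \<forall>g\<in>Ar C. Dm C f = Dm C g \<longrightarrow> Cd C f = Dm C m \<longrightarrow>
        Cd C g = Dm C m \<longrightarrow> Cmp C m f = Cmp C m g \<longrightarrow> f = g" using mm unfolding monic_def by blast
    ultimately have km: "Cmp C k m = Ide C Om" using md by metis
    show "iso C m" unfolding iso_def using k km mk md m by (auto simp: hom_def)
  qed
qed

theorem mainTheorem3:
  assumes "duplicated_category_of_sets S S' \<sigma>O \<sigma>A \<tau>O \<tau>A \<iota>"
    and "X \<in> Ob S"
  shows "monic S' (\<iota> X)"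
proof -
  note D = assms(1)[unfolded duplicated_category_of_sets_def]
  have ES: "ETCS S" and ES': "ETCS S'" and Fs: "is_functor S S' \<sigma>O \<sigma>A"
    and Ls: "preserves_finite_limits S S' \<sigma>O \<sigma>A" and Ft: "is_functor S S' \<tau>O \<tau>A"
    and Lt: "preserves_finite_limits S S' \<tau>O \<tau>A" and nt: "nat_trans S S' \<sigma>O \<sigma>A \<tau>O \<tau>A \<iota>"
    and fin: "\<And>Y. finite_object S Y \<Longrightarrow> \<sigma>O Y = \<tau>O Y \<and> \<iota> Y = Ide S' (\<sigma>O Y)"
    using D by auto
  have c: "category S" and fl: "has_finite_limits S" using ES unfolding ETCS_def topos_def by auto
  have c': "category S'" and w': "well_pointed S'" using ES' unfolding ETCS_def topos_def by auto
  obtain One Om tr where cl: "subobject_classifier S One Om tr"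
    using ES unfolding ETCS_def topos_def by blast
  have t: "terminal S One" and tr: "tr \<in> hom S One Om" using cl unfolding subobject_classifier_def by auto
  have Oneob: "One \<in> Ob S" using term_ob[OF t] .
  have Omob: "Om \<in> Ob S" using hom_obs[OF c tr] by blast
  have t': "terminal S' (\<sigma>O One)" using Ls t unfolding preserves_finite_limits_def by blast
  have f1: "\<tau>O One = \<sigma>O One" "\<iota> One = Ide S' (\<sigma>O One)" using fin[OF one_finite[OF c t]] by auto
  have fO: "\<tau>O Om = \<sigma>O Om" "\<iota> Om = Ide S' (\<sigma>O Om)" using fin[OF omega_finite[OF ES cl]] by auto
  have Xob: "X \<in> Ob S" by fact
  obtain P \<pi>1 \<pi>2 where pr: "product S X X P \<pi>1 \<pi>2" using fl Xob unfolding has_finite_limits_def by blast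
  have p1: "\<pi>1 \<in> hom S P X" and p2: "\<pi>2 \<in> hom S P X" using prod_homs[OF pr] by auto
  have Pob: "P \<in> Ob S" using hom_obs[OF c p1] by blast
  have idX: "Ide S X \<in> hom S X X" using ide_hom[OF c Xob] .
  obtain d where d: "d \<in> hom S X P" and d1: "Cmp S \<pi>1 d = Ide S X" and d2: "Cmp S \<pi>2 d = Ide S X"
    using prod_pair[OF pr idX idX] by blast
  have dm: "monic S d" unfolding monic_def
  proof (intro conjI ballI impI)
    show "d \<in> Ar S" using d by (simp add: hom_def)
    fix f g assume fa: "f \<in> Ar S" and ga: "g \<in> Ar S" and e: "Dm S f = Dm S g"
      and cf: "Cd S f = Dm S d" and cg: "Cd S g = Dm S d" and dfg: "Cmp S d f = Cmp S d g"
    have fh: "f \<in> hom S (Dm S f) X" and gh: "g \<in> hom S (Dm S f) X" using fa ga e cf cg d by (auto simp: hom_def)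
    have "f = Cmp S (Cmp S \<pi>1 d) f" using d1 id_l[OF c fh] by simp
    also have "\<dots> = Cmp S \<pi>1 (Cmp S d f)" using comp_assoc[OF c fh d p1] by simp
    also have "\<dots> = Cmp S (Cmp S \<pi>1 d) g" using dfg comp_assoc[OF c gh d p1] by simp
    also have "\<dots> = g" using d1 id_l[OF c gh] by simp
    finally show "f = g" .
  qed
  have dd: "Dm S d = X" "Cd S d = P" using d by (auto simp: hom_def)
  obtain e ud where e: "e \<in> hom S P Om" and ud: "ud \<in> hom S X One" and pbd: "pullback S e tr X d ud"
    using cl dm dd unfolding subobject_classifier_def by metis
  have ed: "Cmp S e d = Cmp S tr ud" using pbd unfolding pullback_def by blast
  have pbU: "\<And>Z a b. a \<in> hom S Z P \<Longrightarrow> b \<in> hom S Z One \<Longrightarrow> Cmp S e a = Cmp S tr b \<Longrightarrow>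
        (\<exists>!j. j \<in> hom S Z X \<and> Cmp S d j = a \<and> Cmp S ud j = b)"
    using pbd e tr unfolding pullback_def by (auto simp: hom_def)
  obtain Q r1 r2 where prQ: "product S P One Q r1 r2" using fl Pob Oneob unfolding has_finite_limits_def by blast
  have r1: "r1 \<in> hom S Q P" and r2: "r2 \<in> hom S Q One" using prod_homs[OF prQ] by auto
  have er1: "Cmp S e r1 \<in> hom S Q Om" using comp_hom[OF c r1 e] .
  have trr2: "Cmp S tr r2 \<in> hom S Q Om" using comp_hom[OF c r2 tr] .
  obtain E' k where eqk: "equalizer S (Cmp S e r1) (Cmp S tr r2) E' k"
    using fl er1 trr2 unfolding has_finite_limits_def by (metis hom_iff)
  have k: "k \<in> hom S E' Q" and ek: "Cmp S (Cmp S e r1) k = Cmp S (Cmp S tr r2) k"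
    using eq_homs[OF eqk] er1 by (auto simp: hom_def)
  have r1k: "Cmp S r1 k \<in> hom S E' P" using comp_hom[OF c k r1] .
  have r2k: "Cmp S r2 k \<in> hom S E' One" using comp_hom[OF c k r2] .
  have "Cmp S e (Cmp S r1 k) = Cmp S tr (Cmp S r2 k)"
    using ek comp_assoc[OF c k r1 e] comp_assoc[OF c k r2 tr] by simp
  then obtain j where j: "j \<in> hom S E' X" and dj: "Cmp S d j = Cmp S r1 k"
    using pbU[OF r1k r2k] by blast
  have keyS: "Cmp S \<pi>1 (Cmp S r1 k) = Cmp S \<pi>2 (Cmp S r1 k)"
  proof -
    have "Cmp S \<pi>1 (Cmp S r1 k) = Cmp S (Cmp S \<pi>1 d) j" using dj comp_assoc[OF c j d p1] by simp
    also have "\<dots> = Cmp S (Cmp S \<pi>2 d) j" using d1 d2 by simp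
    also have "\<dots> = Cmp S \<pi>2 (Cmp S r1 k)" using dj comp_assoc[OF c j d p2] by simp
    finally show ?thesis .
  qed
  have keyS': "Cmp S' (\<sigma>A \<pi>1) (Cmp S' (\<sigma>A r1) (\<sigma>A k)) = Cmp S' (\<sigma>A \<pi>2) (Cmp S' (\<sigma>A r1) (\<sigma>A k))"
    using keyS F_comp[OF Fs r1k p1] F_comp[OF Fs r1k p2] F_comp[OF Fs k r1] by simp
  have sp1: "\<sigma>A \<pi>1 \<in> hom S' (\<sigma>O P) (\<sigma>O X)" and sp2: "\<sigma>A \<pi>2 \<in> hom S' (\<sigma>O P) (\<sigma>O X)"
    using F_hom[OF Fs p1] F_hom[OF Fs p2] .
  have sr1: "\<sigma>A r1 \<in> hom S' (\<sigma>O Q) (\<sigma>O P)" and sr2: "\<sigma>A r2 \<in> hom S' (\<sigma>O Q) (\<sigma>O One)"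
    using F_hom[OF Fs r1] F_hom[OF Fs r2] .
  have sk: "\<sigma>A k \<in> hom S' (\<sigma>O E') (\<sigma>O Q)" using F_hom[OF Fs k] .
  have se: "\<sigma>A e \<in> hom S' (\<sigma>O P) (\<sigma>O Om)" using F_hom[OF Fs e] .
  have str: "\<sigma>A tr \<in> hom S' (\<sigma>O One) (\<sigma>O Om)" using F_hom[OF Fs tr] .
  have te: "\<tau>A e \<in> hom S' (\<tau>O P) (\<sigma>O Om)" using F_hom[OF Ft e] fO by simp
  have ttr: "\<tau>A tr \<in> hom S' (\<sigma>O One) (\<sigma>O Om)" using F_hom[OF Ft tr] fO f1 by simp
  have td: "\<tau>A d \<in> hom S' (\<tau>O X) (\<tau>O P)" using F_hom[OF Ft d] .
  have tud: "\<tau>A ud \<in> hom S' (\<tau>O X) (\<sigma>O One)" using F_hom[OF Ft ud] f1 by simp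
  have tp1: "\<tau>A \<pi>1 \<in> hom S' (\<tau>O P) (\<tau>O X)" and tp2: "\<tau>A \<pi>2 \<in> hom S' (\<tau>O P) (\<tau>O X)"
    using F_hom[OF Ft p1] F_hom[OF Ft p2] .
  have iX: "\<iota> X \<in> hom S' (\<sigma>O X) (\<tau>O X)" using nt_hom[OF nt Xob] .
  have iP: "\<iota> P \<in> hom S' (\<sigma>O P) (\<tau>O P)" using nt_hom[OF nt Pob] .
  have sP: "product S' (\<sigma>O X) (\<sigma>O X) (\<sigma>O P) (\<sigma>A \<pi>1) (\<sigma>A \<pi>2)"
    using Ls pr unfolding preserves_finite_limits_def by blast
  have tP: "product S' (\<tau>O X) (\<tau>O X) (\<tau>O P) (\<tau>A \<pi>1) (\<tau>A \<pi>2)"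
    using Lt pr unfolding preserves_finite_limits_def by blast
  have sQ: "product S' (\<sigma>O P) (\<sigma>O One) (\<sigma>O Q) (\<sigma>A r1) (\<sigma>A r2)"
    using Ls prQ unfolding preserves_finite_limits_def by blast
  have sE: "equalizer S' (\<sigma>A (Cmp S e r1)) (\<sigma>A (Cmp S tr r2)) (\<sigma>O E') (\<sigma>A k)"
    using Ls eqk unfolding preserves_finite_limits_def by blast
  have ser1: "\<sigma>A (Cmp S e r1) = Cmp S' (\<sigma>A e) (\<sigma>A r1)" using F_comp[OF Fs r1 e] .
  have strr2: "\<sigma>A (Cmp S tr r2) = Cmp S' (\<sigma>A tr) (\<sigma>A r2)" using F_comp[OF Fs r2 tr] .
  have n1: "Cmp S' (\<tau>A \<pi>1) (\<iota> P) = Cmp S' (\<iota> X) (\<sigma>A \<pi>1)" using nt_nat[OF nt p1] .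
  have n2: "Cmp S' (\<tau>A \<pi>2) (\<iota> P) = Cmp S' (\<iota> X) (\<sigma>A \<pi>2)" using nt_nat[OF nt p2] .
  have ne: "Cmp S' (\<tau>A e) (\<iota> P) = \<sigma>A e"
    using nt_nat[OF nt e] fO id_l[OF c' se] by simp
  have ntr: "\<tau>A tr = \<sigma>A tr"
    using nt_nat[OF nt tr] fO f1 id_l[OF c' str] id_r[OF c' ttr] by simp
  have one': "Ide S' (\<sigma>O One) \<in> hom S' (\<sigma>O One) (\<sigma>O One)" using ide_hom[OF c' term_ob[OF t']] .
  have core: "p = q" if p: "p \<in> hom S' (\<sigma>O One) (\<sigma>O X)" and q: "q \<in> hom S' (\<sigma>O One) (\<sigma>O X)"
    and pq: "Cmp S' (\<iota> X) p = Cmp S' (\<iota> X) q" for p q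
  proof -
    obtain u where u: "u \<in> hom S' (\<sigma>O One) (\<sigma>O P)" and u1: "Cmp S' (\<sigma>A \<pi>1) u = p"
      and u2: "Cmp S' (\<sigma>A \<pi>2) u = q" using prod_pair[OF sP p q] by blast
    define ip where "ip = Cmp S' (\<iota> X) p"
    have ip: "ip \<in> hom S' (\<sigma>O One) (\<tau>O X)" unfolding ip_def using comp_hom[OF c' p iX] .
    define v where "v = Cmp S' (\<iota> P) u"
    have v: "v \<in> hom S' (\<sigma>O One) (\<tau>O P)" unfolding v_def using comp_hom[OF c' u iP] .
    have v1: "Cmp S' (\<tau>A \<pi>1) v = ip"
      unfolding v_def ip_def using comp_assoc[OF c' u iP tp1] n1 comp_assoc[OF c' u sp1 iX] u1 by simp
    have v2: "Cmp S' (\<tau>A \<pi>2) v = ip"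
      unfolding v_def ip_def using comp_assoc[OF c' u iP tp2] n2 comp_assoc[OF c' u sp2 iX] u2 pq by simp
    define wd where "wd = Cmp S' (\<tau>A d) ip"
    have wd: "wd \<in> hom S' (\<sigma>O One) (\<tau>O P)" unfolding wd_def using comp_hom[OF c' ip td] .
    have tidX: "\<tau>A (Ide S X) = Ide S' (\<tau>O X)" using F_id[OF Ft Xob] .
    have w1: "Cmp S' (\<tau>A \<pi>1) wd = ip"
      unfolding wd_def using comp_assoc[OF c' ip td tp1] F_comp[OF Ft d p1] d1 tidX id_l[OF c' ip] by simp
    have w2: "Cmp S' (\<tau>A \<pi>2) wd = ip"
      unfolding wd_def using comp_assoc[OF c' ip td tp2] F_comp[OF Ft d p2] d2 tidX id_l[OF c' ip] by simp
    have vw: "v = wd" using prod_uniq[OF tP ip ip v v1 v2 wd w1 w2] .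
    define tt where "tt = Cmp S' (\<tau>A ud) ip"
    have tt: "tt \<in> hom S' (\<sigma>O One) (\<sigma>O One)" unfolding tt_def using comp_hom[OF c' ip tud] .
    have ttI: "tt = Ide S' (\<sigma>O One)" using term_uniq[OF c' t' tt one'] .
    have "Cmp S' (\<sigma>A e) u = Cmp S' (\<tau>A e) v"
      unfolding v_def using ne comp_assoc[OF c' u iP te] by simp
    also have "\<dots> = Cmp S' (\<tau>A e) (Cmp S' (\<tau>A d) ip)" using vw wd_def by simp
    also have "\<dots> = Cmp S' (\<tau>A (Cmp S e d)) ip"
      using comp_assoc[OF c' ip td te] F_comp[OF Ft d e] by simp
    also have "\<dots> = Cmp S' (Cmp S' (\<tau>A tr) (\<tau>A ud)) ip" using ed F_comp[OF Ft ud tr] by simp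
    also have "\<dots> = Cmp S' (\<sigma>A tr) tt"
      unfolding tt_def using comp_assoc[OF c' ip tud ttr] ntr by simp
    finally have seu: "Cmp S' (\<sigma>A e) u = Cmp S' (\<sigma>A tr) tt" .
    obtain w where w: "w \<in> hom S' (\<sigma>O One) (\<sigma>O Q)" and wr1: "Cmp S' (\<sigma>A r1) w = u"
      and wr2: "Cmp S' (\<sigma>A r2) w = Ide S' (\<sigma>O One)"
      using prod_pair[OF sQ u one'] by blast
    have wh: "w \<in> hom S' (\<sigma>O One) (Dm S' (\<sigma>A (Cmp S e r1)))"
      using w ser1 comp_hom[OF c' sr1 se] by (auto simp: hom_def)
    have "Cmp S' (\<sigma>A (Cmp S e r1)) w = Cmp S' (\<sigma>A (Cmp S tr r2)) w"
      using ser1 strr2 comp_assoc[OF c' w sr1 se] comp_assoc[OF c' w sr2 str] wr1 wr2 seu ttI by simp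
    then obtain z where z: "z \<in> hom S' (\<sigma>O One) (\<sigma>O E')" and zk: "Cmp S' (\<sigma>A k) z = w"
      using eq_factor[OF sE wh] by blast
    have rk: "Cmp S' (\<sigma>A r1) (\<sigma>A k) \<in> hom S' (\<sigma>O E') (\<sigma>O P)" using comp_hom[OF c' sk sr1] .
    have uz: "u = Cmp S' (Cmp S' (\<sigma>A r1) (\<sigma>A k)) z"
      using wr1 zk comp_assoc[OF c' z sk sr1] by simp
    have "p = Cmp S' (Cmp S' (\<sigma>A \<pi>1) (Cmp S' (\<sigma>A r1) (\<sigma>A k))) z"
      using u1 uz comp_assoc[OF c' z rk sp1] by simp
    also have "\<dots> = Cmp S' (Cmp S' (\<sigma>A \<pi>2) (Cmp S' (\<sigma>A r1) (\<sigma>A k))) z" using keyS' by simp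
    also have "\<dots> = q" using u2 uz comp_assoc[OF c' z rk sp2] by simp
    finally show "p = q" .
  qed
  show ?thesis unfolding monic_def
  proof (intro conjI ballI impI)
    show "\<iota> X \<in> Ar S'" using iX by (simp add: hom_def)
    fix f g assume fa: "f \<in> Ar S'" and ga: "g \<in> Ar S'" and eq: "Dm S' f = Dm S' g"
      and cf: "Cd S' f = Dm S' (\<iota> X)" and cg: "Cd S' g = Dm S' (\<iota> X)"
      and ifg: "Cmp S' (\<iota> X) f = Cmp S' (\<iota> X) g"
    have fh: "f \<in> hom S' (Dm S' f) (\<sigma>O X)" and gh: "g \<in> hom S' (Dm S' f) (\<sigma>O X)"
      using fa ga eq cf cg iX by (auto simp: hom_def)
    show "f = g"
    proof (rule wp[OF w' t' c' fh gh])
      fix x assume x: "x \<in> hom S' (\<sigma>O One) (Dm S' f)"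
      show "Cmp S' f x = Cmp S' g x"
        by (rule core[OF comp_hom[OF c' x fh] comp_hom[OF c' x gh]])
           (use comp_assoc[OF c' x fh iX] comp_assoc[OF c' x gh iX] ifg in simp)
    qed
  qed
qed

end
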